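(* Let $\mathcal S=\{y\in\mathbb R^d:\|y\|=1,\ y_i>0\text{ for all }i\}$. For $Y_0\in\mathcal S$ define the Markov chain $Y_k=\dfrac{A_{I_k}Y_{k-1}}{\|A_{I_k}Y_{k-1}\|}$, where $I_1,I_2,\dots$ are i.i.d. uniform on $\{1,\dots,d\}$. Then there is a unique probability measure $\nu$ on $\mathcal S$ which is the limit (in the weak sense) of the law of $Y_k$ as $k\to\infty$, and $\nu$ is the same for every choice of $Y_0\in\mathcal S$.
   Context: $d\ge2$; $P=(p_{ij})$ is the transition matrix of a connected network on $\{1,\dots,d\}$ without loops ($p_{ii}=0$, irreducible). For $x\in\mathbb R^d$, $\hat x_i=\sum_j p_{ij}x_j$. Fix $e_1,\dots,e_d\in(0,1)$. The linear map $A_i$ is given by $(A_ix)_j=x_j$ for $j\ne i$ and $(A_ix)_i=e_i\hat x_i$. $\|\cdot\|$ is the Euclidean norm. *)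

theory Defs
  imports "HOL-Probability.Probability"
begin

text \<open>Vectors in R^d are modelled as real^'n with 'n a finite index type, d = CARD('n).
  The transition matrix is P :: 'n => 'n => real.\<close>

definition hatx :: "('n::finite \<Rightarrow> 'n \<Rightarrow> real) \<Rightarrow> real^'n \<Rightarrow> 'n \<Rightarrow> real" where
  "hatx P x i = (\<Sum>j\<in>UNIV. P i j * x $ j)"

definition Amap :: "('n::finite \<Rightarrow> 'n \<Rightarrow> real) \<Rightarrow> ('n \<Rightarrow> real) \<Rightarrow> 'n \<Rightarrow> real^'n \<Rightarrow> real^'n" where
  "Amap P e i x = (\<chi> j. if j = i then e i * hatx P x i else x $ j)"

definition stepY :: "('n::finite \<Rightarrow> 'n \<Rightarrow> real) \<Rightarrow> ('n \<Rightarrow> real) \<Rightarrow> 'n \<Rightarrow> real^'n \<Rightarrow> real^'n" where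
  "stepY P e i y = (1 / norm (Amap P e i y)) *\<^sub>R Amap P e i y"

fun lawY :: "('n::finite \<Rightarrow> 'n \<Rightarrow> real) \<Rightarrow> ('n \<Rightarrow> real) \<Rightarrow> nat \<Rightarrow> real^'n \<Rightarrow> (real^'n) pmf" where
  "lawY P e 0 y = return_pmf y"
| "lawY P e (Suc k) y = bind_pmf (lawY P e k y) (\<lambda>x. map_pmf (\<lambda>i. stepY P e i x) (pmf_of_set UNIV))"

definition Spos :: "(real^'n::finite) set" where
  "Spos = {y. norm y = 1 \<and> (\<forall>i. y $ i > 0)}"

definition weak_conv_on :: "'a::topological_space set \<Rightarrow> (nat \<Rightarrow> 'a measure) \<Rightarrow> 'a measure \<Rightarrow> bool" where
  "weak_conv_on S \<mu>s \<nu> \<longleftrightarrow>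
     (\<forall>f :: 'a \<Rightarrow> real. continuous_on S f \<and> bounded (f ` S) \<longrightarrow>
        (\<lambda>k. \<integral>x. indicator S x * f x \<partial>(\<mu>s k)) \<longlonglongrightarrow> (\<integral>x. indicator S x * f x \<partial>\<nu>))"

end

theory Submission
  imports Defs "HOL-Library.Stream"
begin

locale chain =
  fixes P :: "'n::finite \<Rightarrow> 'n \<Rightarrow> real" and e :: "'n \<Rightarrow> real"
  assumes Pnn: "\<And>i j. P i j \<ge> 0"
    and Psum: "\<And>i. (\<Sum>j\<in>UNIV. P i j) = 1"
    and Pdiag: "\<And>i. P i i = 0"
    and Pirr: "\<And>i j. (i, j) \<in> {(a, b). P a b > 0}\<^sup>+"
    and epos: "\<And>i. 0 < e i" and elt1: "\<And>i. e i < 1"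
begin

definition Nb :: "'n \<Rightarrow> 'n set" where "Nb u = {k. 0 < P u k}"

lemma Nb_ne: "Nb u \<noteq> {}"
proof
  assume "Nb u = {}"
  then have "\<not> 0 < P u k" for k by (auto simp: Nb_def)
  then have "P u k = 0" for k using Pnn[of u k] by (meson not_less order.antisym)
  then show False using Psum[of u] by simp
qed

lemma u_notin_Nb: "u \<notin> Nb u" by (simp add: Nb_def Pdiag)

definition applyw :: "'n list \<Rightarrow> real^'n \<Rightarrow> real^'n" where
  "applyw ws x = foldr (Amap P e) ws x"

lemma applyw_Nil[simp]: "applyw [] x = x" by (simp add: applyw_def)
lemma applyw_Cons[simp]: "applyw (u # ws) x = Amap P e u (applyw ws x)" by (simp add: applyw_def)
lemma applyw_append[simp]: "applyw (ws @ vs) x = applyw ws (applyw vs x)" by (simp add: applyw_def)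

fun coef :: "'n list \<Rightarrow> 'n \<Rightarrow> 'n \<Rightarrow> real" where
  "coef [] r j = (if r = j then 1 else 0)"
| "coef (u # w) r j = (if r = u then e u * (\<Sum>k\<in>UNIV. P u k * coef w k j) else coef w r j)"

lemma coef_nonneg: "coef w r j \<ge> 0"
  by (induction w arbitrary: r) (auto intro!: sum_nonneg mult_nonneg_nonneg Pnn less_imp_le[OF epos])

lemma applyw_coef: "applyw w x $ r = (\<Sum>j\<in>UNIV. coef w r j * x $ j)"
proof (induction w arbitrary: r)
  case Nil
  have "(\<Sum>j\<in>UNIV. coef [] r j * x $ j) = (\<Sum>j\<in>UNIV. if r = j then x $ j else 0)"
    by (rule sum.cong) auto
  then show ?case by simp
next
  case (Cons u w)
  show ?case
  proof (cases "r = u")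
    case True
    have "applyw (u # w) x $ r = e u * (\<Sum>k\<in>UNIV. P u k * (\<Sum>j\<in>UNIV. coef w k j * x $ j))"
      using True by (simp add: Amap_def hatx_def Cons.IH)
    also have "\<dots> = e u * (\<Sum>k\<in>UNIV. \<Sum>j\<in>UNIV. P u k * coef w k j * x $ j)"
      by (simp add: sum_distrib_left mult_ac)
    also have "\<dots> = e u * (\<Sum>j\<in>UNIV. \<Sum>k\<in>UNIV. P u k * coef w k j * x $ j)"
      by (subst sum.swap) (rule refl)
    also have "\<dots> = (\<Sum>j\<in>UNIV. (e u * (\<Sum>k\<in>UNIV. P u k * coef w k j)) * x $ j)"
      by (simp add: sum_distrib_left sum_distrib_right mult_ac)
    finally show ?thesis using True by simp
  next
    case False
    then show ?thesis by (simp add: Amap_def Cons.IH)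
  qed
qed

fun R :: "'n list \<Rightarrow> 'n \<Rightarrow> 'n set" where
  "R [] r = {r}"
| "R (u # w) r = (if r = u then (\<Union>k\<in>Nb u. R w k) else R w r)"

lemma coef_pos_iff: "coef w r j > 0 \<longleftrightarrow> j \<in> R w r"
proof (induction w arbitrary: r)
  case Nil
  then show ?case by auto
next
  case (Cons u w)
  show ?case
  proof (cases "r = u")
    case True
    have "(\<Sum>k\<in>UNIV. P u k * coef w k j) > 0 \<longleftrightarrow> (\<exists>k. P u k * coef w k j > 0)"
    proof
      assume "(\<Sum>k\<in>UNIV. P u k * coef w k j) > 0"
      then show "\<exists>k. P u k * coef w k j > 0"
        by (metis (no_types, lifting) linorder_not_le sum_nonpos)
    next
      assume "\<exists>k. P u k * coef w k j > 0"
      then obtain k where "P u k * coef w k j > 0" by blast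
      moreover have "P u k * coef w k j \<le> (\<Sum>k\<in>UNIV. P u k * coef w k j)"
        by (rule member_le_sum) (auto intro: mult_nonneg_nonneg Pnn coef_nonneg)
      ultimately show "(\<Sum>k\<in>UNIV. P u k * coef w k j) > 0" by linarith
    qed
    also have "\<dots> \<longleftrightarrow> (\<exists>k. P u k > 0 \<and> coef w k j > 0)"
      using Pnn coef_nonneg
      by (metis less_eq_real_def mult_eq_0_iff mult_pos_pos)
    finally show ?thesis using True epos[of u] Cons.IH
      by (auto simp: Nb_def zero_less_mult_iff)
  next
    case False
    then show ?thesis using Cons.IH by simp
  qed
qed

definition Rs :: "'n list \<Rightarrow> 'n set \<Rightarrow> 'n set" where
  "Rs w S = (\<Union>r\<in>S. R w r)"

lemma R_append: "R (w @ v) r = Rs v (R w r)"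
  by (induction w arbitrary: r) (auto simp: Rs_def)

lemma Rs_append: "Rs (w @ v) S = Rs v (Rs w S)"
  by (auto simp: Rs_def R_append)

lemma Rs_mono: "A \<subseteq> B \<Longrightarrow> Rs w A \<subseteq> Rs w B"
  by (auto simp: Rs_def)

lemma Rs_single: "Rs [u] S = (if u \<in> S then (S - {u}) \<union> Nb u else S)"
  using u_notin_Nb by (auto simp: Rs_def split: if_splits)

lemma R_ne: "R w r \<noteq> {}"
  by (induction w arbitrary: r) (use Nb_ne in auto)

lemma Rs_ne: "S \<noteq> {} \<Longrightarrow> Rs w S \<noteq> {}"
  using R_ne by (auto simp: Rs_def)

lemma step_bad:
  assumes "u \<in> Y"
  shows "Rs [u] X - Rs [u] Y \<subseteq> X - Y" "Nb u \<subseteq> Rs [u] Y"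
  using assms by (auto simp: Rs_single)

lemma path_absorb:
  assumes "(y, z) \<in> {(a, b). P a b > 0}\<^sup>+"
  shows "y \<in> Y \<Longrightarrow> \<exists>p. Rs p X - Rs p Y \<subseteq> X - Y \<and> z \<in> Rs p Y"
  using assms
proof (induction arbitrary: X Y rule: trancl_induct)
  case (base z)
  then show ?case by (intro exI[of _ "[y]"]) (auto simp: Nb_def Rs_single)
next
  case (step w z)
  obtain p where p: "Rs p X - Rs p Y \<subseteq> X - Y" "w \<in> Rs p Y" using step.IH step.prems by blast
  have "Rs [w] (Rs p X) - Rs [w] (Rs p Y) \<subseteq> Rs p X - Rs p Y" "Nb w \<subseteq> Rs [w] (Rs p Y)"
    using step_bad[OF p(2)] by auto
  moreover have "z \<in> Nb w" using step.hyps by (auto simp: Nb_def)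
  ultimately show ?case using p
    by (intro exI[of _ "p @ [w]"]) (auto simp: Rs_append)
qed

lemma absorb:
  assumes "Y \<noteq> {}"
  shows "\<exists>v. Rs v X \<subseteq> Rs v Y"
  using assms
proof (induction "card (X - Y)" arbitrary: X Y rule: less_induct)
  case less
  show ?case
  proof (cases "X \<subseteq> Y")
    case True
    then show ?thesis by (intro exI[of _ "[]"]) (simp add: Rs_mono)
  next
    case False
    then obtain z where z: "z \<in> X" "z \<notin> Y" by blast
    obtain y where y: "y \<in> Y" using less.prems by blast
    obtain p where p: "Rs p X - Rs p Y \<subseteq> X - Y" "z \<in> Rs p Y"
      using path_absorb[OF Pirr[of y z] y] by blast
    have sub: "Rs p X - Rs p Y \<subseteq> (X - Y) - {z}" using p by auto
    have "card (Rs p X - Rs p Y) < card (X - Y)"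
    proof -
      have "card (Rs p X - Rs p Y) \<le> card ((X - Y) - {z})" by (rule card_mono[OF _ sub]) simp
      also have "\<dots> < card (X - Y)" by (intro card_Diff1_less) (use z in auto)
      finally show ?thesis .
    qed
    moreover have "Rs p Y \<noteq> {}" using p by auto
    ultimately obtain v where "Rs v (Rs p X) \<subseteq> Rs v (Rs p Y)" using less.hyps by blast
    then show ?thesis by (intro exI[of _ "p @ v"]) (simp add: Rs_append)
  qed
qed

lemma sync_aux: "finite F \<Longrightarrow> \<exists>w. \<forall>r\<in>F. Rs w UNIV \<subseteq> R w r"
proof (induction F rule: finite_induct)
  case empty
  then show ?case by simp
next
  case (insert r F)
  then obtain w where w: "\<forall>r\<in>F. Rs w UNIV \<subseteq> R w r" by blast
  obtain v where v: "Rs v (Rs w UNIV) \<subseteq> Rs v (R w r)" using absorb[OF R_ne] by blast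
  have "Rs (w @ v) UNIV \<subseteq> R (w @ v) r'" if "r' \<in> insert r F" for r'
  proof (cases "r' = r")
    case True
    then show ?thesis using v by (simp add: Rs_append R_append)
  next
    case False
    then have "r' \<in> F" using that by simp
    then show ?thesis using w Rs_mono by (simp add: Rs_append R_append)
  qed
  then show ?case by blast
qed

lemma sync: "\<exists>w T. T \<noteq> {} \<and> (\<forall>r. R w r = T)"
proof -
  obtain w where w: "\<forall>r. Rs w UNIV \<subseteq> R w r" using sync_aux[of UNIV] by auto
  have "R w r = Rs w UNIV" for r using w by (auto simp: Rs_def)
  then show ?thesis using Rs_ne[of UNIV w] by blast
qed

end

context chain
begin

definition pos :: "real^'n \<Rightarrow> bool" where "pos x \<longleftrightarrow> (\<forall>i. 0 < x $ i)"

lemma hatx_pos: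
  assumes "pos x" shows "hatx P x u > 0"
proof -
  obtain k where k: "k \<in> Nb u" using Nb_ne by blast
  have "P u k * x $ k > 0" using k assms by (simp add: Nb_def pos_def)
  moreover have "P u k * x $ k \<le> (\<Sum>j\<in>UNIV. P u j * x $ j)"
    by (rule member_le_sum) (use assms Pnn in \<open>auto simp: pos_def less_imp_le\<close>)
  ultimately show ?thesis by (simp add: hatx_def)
qed

lemma Amap_pos: "pos x \<Longrightarrow> pos (Amap P e u x)"
  using hatx_pos epos by (auto simp: pos_def Amap_def)

lemma applyw_pos: "pos x \<Longrightarrow> pos (applyw w x)"
  by (induction w) (auto intro: Amap_pos)

lemma pos_nonzero: "pos x \<Longrightarrow> x \<noteq> 0"
  by (auto simp: pos_def)

lemma applyw_mono:
  assumes "\<And>j. x $ j \<le> x' $ j"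
  shows "applyw w x $ r \<le> applyw w x' $ r"
  unfolding applyw_coef by (intro sum_mono mult_left_mono assms coef_nonneg)

lemma applyw_scale: "applyw w (c *\<^sub>R x) = c *\<^sub>R applyw w x"
  by (simp add: vec_eq_iff applyw_coef sum_distrib_left mult_ac)

definition close :: "real \<Rightarrow> real^'n \<Rightarrow> real^'n \<Rightarrow> bool" where
  "close d x y \<longleftrightarrow> (\<exists>a>0. \<forall>i. a * y $ i \<le> x $ i \<and> x $ i \<le> a * (1 + d) * y $ i)"

lemma close_applyw:
  assumes "close d x y" shows "close d (applyw w x) (applyw w y)"
proof -
  obtain a where a: "a > 0" "\<And>i. a * y $ i \<le> x $ i" "\<And>i. x $ i \<le> a * (1 + d) * y $ i"
    using assms by (auto simp: close_def)
  have "applyw w (a *\<^sub>R y) $ r \<le> applyw w x $ r" for r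
    by (rule applyw_mono) (use a in simp)
  moreover have "applyw w x $ r \<le> applyw w ((a * (1 + d)) *\<^sub>R y) $ r" for r
    by (rule applyw_mono) (use a in simp)
  ultimately show ?thesis using a(1) unfolding close_def applyw_scale
    by (intro exI[of _ a]) (simp add: mult.assoc)
qed

lemma close_scale:
  assumes "close d x y" "s > 0" "t > 0"
  shows "close d (s *\<^sub>R x) (t *\<^sub>R y)"
proof -
  obtain a where a: "a > 0" "\<And>i. a * y $ i \<le> x $ i" "\<And>i. x $ i \<le> a * (1 + d) * y $ i"
    using assms by (auto simp: close_def)
  have "a * s / t * (t * y $ i) \<le> s * x $ i" for i
    using a(2)[of i] assms(2,3) by (simp add: field_simps)
  moreover have "s * x $ i \<le> a * s / t * (1 + d) * (t * y $ i)" for i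
  proof -
    have "a * s / t * (1 + d) * (t * y $ i) = s * (a * (1 + d) * y $ i)"
      using assms(3) by (simp add: field_simps)
    then show ?thesis using a(3)[of i] assms(2) by (simp add: mult_left_mono)
  qed
  ultimately show ?thesis unfolding close_def using a(1) assms
    by (intro exI[of _ "a * s / t"]) simp
qed

lemma close_mono:
  assumes "close d x y" "d \<le> d'" "pos y"
  shows "close d' x y"
proof -
  obtain a where a: "a > 0" "\<And>i. a * y $ i \<le> x $ i" "\<And>i. x $ i \<le> a * (1 + d) * y $ i"
    using assms by (auto simp: close_def)
  have "a * (1 + d) * y $ i \<le> a * (1 + d') * y $ i" for i
    using assms(2,3) a(1) by (intro mult_right_mono mult_left_mono) (auto simp: pos_def less_imp_le)
  then show ?thesis unfolding close_def using a by (meson order_trans)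
qed

lemma close_unit:
  assumes "pos x" "pos y" "norm x = 1" "norm y = 1" "close d x y"
  shows "norm (x - y) \<le> d" "\<And>i. y $ i \<le> (1 + d) * x $ i"
proof -
  obtain a where a: "a > 0" "\<And>i. a * y $ i \<le> x $ i" "\<And>i. x $ i \<le> a * (1 + d) * y $ i"
    using assms by (auto simp: close_def)
  have "norm (a *\<^sub>R y) \<le> norm x"
    by (rule norm_le_componentwise_cart) (use a assms in \<open>auto simp: pos_def less_imp_le\<close>)
  then have a1: "a \<le> 1" using assms a(1) by simp
  have bpos: "a * (1 + d) > 0"
  proof -
    obtain i :: 'n where True by blast
    have "0 < x $ i" using assms(1) by (simp add: pos_def)
    also have "\<dots> \<le> a * (1 + d) * y $ i" using a(3) .
    finally show ?thesis using assms(2) unfolding pos_def by (metis zero_less_mult_pos2)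
  qed
  have "norm x \<le> norm ((a * (1 + d)) *\<^sub>R y)"
  proof (rule norm_le_componentwise_cart)
    fix i
    have "0 < x $ i" using assms(1) by (simp add: pos_def)
    then show "norm (x $ i) \<le> norm (((a * (1 + d)) *\<^sub>R y) $ i)" using a(3)[of i] by simp
  qed
  then have b1: "1 \<le> a * (1 + d)" using assms bpos by simp
  have "0 \<le> a * d" using a1 b1 by (simp add: distrib_left)
  then have d0: "0 \<le> d" using a(1) by (simp add: zero_le_mult_iff)
  have "norm (x - y) \<le> norm ((a * (1 + d) - a) *\<^sub>R y)"
  proof (rule norm_le_componentwise_cart)
    fix i
    have yi: "0 < y $ i" using assms(2) by (simp add: pos_def)
    have eq: "(a * (1 + d) - a) * y $ i = a * (1 + d) * y $ i - a * y $ i"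
      by (simp add: left_diff_distrib)
    have "a * y $ i \<le> 1 * y $ i" using a1 yi by (intro mult_right_mono) auto
    then have "x $ i - y $ i \<le> (a * (1 + d) - a) * y $ i"
      using a(3)[of i] eq by linarith
    moreover have "1 * y $ i \<le> a * (1 + d) * y $ i" using b1 yi by (intro mult_right_mono) auto
    then have "y $ i - x $ i \<le> (a * (1 + d) - a) * y $ i"
      using a(2)[of i] eq by linarith
    moreover have "0 \<le> (a * (1 + d) - a) * y $ i" using a(1) d0 yi by simp
    ultimately show "norm ((x - y) $ i) \<le> norm (((a * (1 + d) - a) *\<^sub>R y) $ i)"
      by (simp add: abs_le_iff)
  qed
  also have "\<dots> = a * d" using assms(4) a(1) d0 by (simp add: algebra_simps)
  also have "\<dots> \<le> 1 * d" using a1 d0 by (intro mult_right_mono) auto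
  finally show "norm (x - y) \<le> d" by simp
  fix i
  have yi: "0 < y $ i" using assms(2) by (simp add: pos_def)
  have "y $ i \<le> x $ i / a" using a(2)[of i] a(1) by (simp add: field_simps)
  also have "\<dots> \<le> (1 + d) * x $ i"
  proof -
    have "1 / a \<le> 1 + d" using b1 a(1) by (simp add: field_simps)
    moreover have "0 \<le> x $ i" using assms(1) by (simp add: pos_def less_imp_le)
    ultimately show ?thesis by (metis divide_inverse_commute inverse_eq_divide mult_right_mono)
  qed
  finally show "y $ i \<le> (1 + d) * x $ i" .
qed

end

lemma ratio_cmp:
  fixes p p' q q' k :: real
  assumes "0 \<le> p'" "0 < q" "0 < q'" "0 \<le> k" "k * p' \<le> p" "k * q \<le> q'"
  shows "k^2 * (p' / q') \<le> p / q"
proof -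
  have p0: "0 \<le> p" using assms(1,4,5) by (meson mult_nonneg_nonneg order_trans)
  have "(k * p') * (k * q) \<le> p * q'"
    by (rule mult_mono) (use assms p0 in auto)
  then show ?thesis using assms(2,3) by (simp add: field_simps power2_eq_square)
qed

lemma ex_min_fun: "\<exists>l::'a::finite. \<forall>r. f l \<le> (f r :: real)"
proof -
  have "Min (range f) \<in> range f" by (rule Min_in) auto
  then obtain l where "f l = Min (range f)" by (metis imageE)
  then show ?thesis by (intro exI[of _ l]) auto
qed

context chain
begin

lemma contract:
  assumes T: "T \<noteq> {}" and supp: "\<And>r j. coef w r j > 0 \<longleftrightarrow> j \<in> T"
    and kap: "0 < kap" and cmp: "\<And>r l j. j \<in> T \<Longrightarrow> kap * coef w l j \<le> coef w r j"
    and x: "pos x" and y: "pos y"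
  shows "close (1 / kap^2 - 1) (applyw w x) (applyw w y)"
    and "close d x y \<Longrightarrow> close ((1 - kap^2) * d) (applyw w x) (applyw w y)"
proof -
  define S where "S r z = (\<Sum>j\<in>T. coef w r j * z j)" for r and z :: "'n \<Rightarrow> real"
  have W: "applyw w z $ r = S r (\<lambda>j. z $ j)" for z r
  proof -
    have "applyw w z $ r = (\<Sum>j\<in>UNIV. coef w r j * z $ j)" by (rule applyw_coef)
    also have "\<dots> = (\<Sum>j\<in>T. coef w r j * z $ j)"
    proof (rule sum.mono_neutral_right)
      show "\<forall>i\<in>UNIV - T. coef w r i * z $ i = 0"
        using supp coef_nonneg by (metis DiffD2 less_eq_real_def mult_eq_0_iff)
    qed auto
    finally show ?thesis by (simp add: S_def)
  qed
  have Sge: "kap * S l z \<le> S r z" if "\<And>j. 0 \<le> z j" for l r z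
    unfolding S_def sum_distrib_left
    by (intro sum_mono) (use cmp that in \<open>auto simp: mult.assoc[symmetric] intro: mult_right_mono\<close>)
  have Snn: "0 \<le> S r z" if "\<And>j. 0 \<le> z j" for r z
    unfolding S_def using that coef_nonneg by (intro sum_nonneg) auto
  have Spos: "0 < S r z" if "\<And>j. 0 < z j" for r z
    unfolding S_def using that T supp by (intro sum_pos) auto
  have ypos: "0 < y $ j" for j using y by (simp add: pos_def)
  have xpos: "0 < x $ j" for j using x by (simp add: pos_def)
  have Sy: "0 < S r (\<lambda>j. y $ j)" for r using Spos ypos by blast
  have k1: "kap \<le> 1"
  proof -
    obtain r :: 'n where True by blast
    have "kap * S r (\<lambda>j. y $ j) \<le> 1 * S r (\<lambda>j. y $ j)" using Sge[of "\<lambda>j. y $ j" r r] ypos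
      by (simp add: less_imp_le)
    then show ?thesis using Sy[of r] by simp
  qed
  define rr where "rr r = S r (\<lambda>j. x $ j) / S r (\<lambda>j. y $ j)" for r
  obtain l where l: "\<And>r. rr l \<le> rr r" using ex_min_fun[of rr] by blast
  have clos: "close d' (applyw w x) (applyw w y)"
    if m0: "0 < rr l" and up: "\<And>r. rr r \<le> rr l * (1 + d')" for d'
    unfolding close_def
  proof (intro exI[of _ "rr l"] conjI allI m0)
    fix r
    have "rr l \<le> rr r" by (rule l)
    then show "rr l * applyw w y $ r \<le> applyw w x $ r"
      using Sy[of r] by (simp add: W rr_def pos_le_divide_eq)
    show "applyw w x $ r \<le> rr l * (1 + d') * applyw w y $ r"
      using up[of r] Sy[of r] by (simp add: W rr_def pos_divide_le_eq)
  qed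
  have rrpos: "0 < rr r" for r using Sy Spos xpos by (simp add: rr_def)
  show "close (1 / kap^2 - 1) (applyw w x) (applyw w y)"
  proof (rule clos[OF rrpos])
    fix r
    have "kap^2 * rr r \<le> rr l" unfolding rr_def
      by (rule ratio_cmp) (use Snn Sge Sy xpos ypos kap in \<open>auto simp: less_imp_le\<close>)
    then show "rr r \<le> rr l * (1 + (1 / kap^2 - 1))"
      using kap by (simp add: field_simps)
  qed
  assume "close d x y"
  then obtain a where a: "a > 0" "\<And>i. a * y $ i \<le> x $ i" "\<And>i. x $ i \<le> a * (1 + d) * y $ i"
    by (auto simp: close_def)
  have d0: "0 \<le> d"
  proof -
    obtain i :: 'n where True by blast
    have "a * y $ i \<le> (a * (1 + d)) * y $ i" using a(2,3)[of i] by simp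
    then have "a * 1 \<le> a * (1 + d)" using ypos[of i] by (metis mult.right_neutral mult_le_cancel_right_pos)
    then show ?thesis using a(1) by simp
  qed
  define g where "g j = x $ j - a * y $ j" for j
  define h where "h j = a * (1 + d) * y $ j - x $ j" for j
  have g0: "0 \<le> g j" for j using a(2) by (simp add: g_def)
  have h0: "0 \<le> h j" for j using a(3) by (simp add: h_def)
  have Sx: "S r (\<lambda>j. x $ j) = a * S r (\<lambda>j. y $ j) + S r g" for r
    by (simp add: S_def g_def sum_distrib_left algebra_simps sum.distrib[symmetric])
  have Sgh: "S r g + S r h = a * d * S r (\<lambda>j. y $ j)" for r
    by (simp add: S_def g_def h_def sum_distrib_left algebra_simps sum.distrib[symmetric])
  have rr_eq: "rr r = a + S r g / S r (\<lambda>j. y $ j)" for r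
    using Sy[of r] by (simp add: rr_def Sx field_simps)
  have diff: "rr r - rr l \<le> (1 - kap^2) * (a * d)" for r
  proof -
    have "S r g / S r (\<lambda>j. y $ j) = a * d - S r h / S r (\<lambda>j. y $ j)"
      using Sgh[of r] Sy[of r] by (simp add: field_simps)
    moreover have "kap^2 * (S l h / S l (\<lambda>j. y $ j)) \<le> S r h / S r (\<lambda>j. y $ j)"
      by (rule ratio_cmp) (use Snn Sge Sy h0 ypos kap in \<open>auto simp: less_imp_le\<close>)
    moreover have "kap^2 * (S l g / S l (\<lambda>j. y $ j)) \<le> S l g / S l (\<lambda>j. y $ j)"
    proof -
      have "0 \<le> S l g / S l (\<lambda>j. y $ j)" using Snn[OF g0] Sy[of l] by simp
      moreover have "kap^2 \<le> 1" using k1 kap by (simp add: power_le_one)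
      ultimately show ?thesis by (metis mult_left_le_one_le zero_le_power2)
    qed
    moreover have "kap^2 * (S l h / S l (\<lambda>j. y $ j)) + kap^2 * (S l g / S l (\<lambda>j. y $ j))
        = kap^2 * (a * d)"
    proof -
      have "kap^2 * (S l h / S l (\<lambda>j. y $ j)) + kap^2 * (S l g / S l (\<lambda>j. y $ j))
          = kap^2 * ((S l g + S l h) / S l (\<lambda>j. y $ j))"
        by (simp add: add_divide_distrib algebra_simps)
      also have "\<dots> = kap^2 * (a * d)" using Sgh[of l] Sy[of l] by simp
      finally show ?thesis .
    qed
    ultimately show ?thesis using rr_eq[of r] rr_eq[of l] by (simp add: algebra_simps)
  qed
  have al: "a \<le> rr l" using rr_eq[of l] Snn[OF g0, of l] Sy[of l] by simp
  show "close ((1 - kap^2) * d) (applyw w x) (applyw w y)"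
  proof (rule clos[OF rrpos])
    fix r
    have "0 \<le> (1 - kap^2) * d" using k1 kap d0 by (simp add: power_le_one)
    then have "(1 - kap^2) * (a * d) \<le> (1 - kap^2) * (rr l * d)"
      using al d0 k1 kap by (intro mult_left_mono mult_right_mono) (auto simp: power_le_one)
    then show "rr r \<le> rr l * (1 + (1 - kap^2) * d)"
      using diff[of r] by (simp add: algebra_simps)
  qed
qed

end

context chain
begin

lemma good_word: "\<exists>w T kap. T \<noteq> {} \<and> (\<forall>r j. coef w r j > 0 \<longleftrightarrow> j \<in> T) \<and> 0 < kap \<and>
   (\<forall>r l j. j \<in> T \<longrightarrow> kap * coef w l j \<le> coef w r j)"
proof -
  obtain w T where T: "T \<noteq> {}" "\<And>r. R w r = T" using sync by blast
  have supp: "coef w r j > 0 \<longleftrightarrow> j \<in> T" for r j using coef_pos_iff T by simp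
  define C where "C = (\<lambda>(r, j). coef w r j) ` (UNIV \<times> T)"
  have fin: "finite C" "C \<noteq> {}" using T by (auto simp: C_def)
  have Cpos: "c \<in> C \<Longrightarrow> 0 < c" for c using supp by (auto simp: C_def)
  define kap where "kap = Min C / Max C"
  have mn: "0 < Min C" using fin Cpos by simp
  have mx: "0 < Max C" using fin Cpos by (meson Max_in)
  have "kap * coef w l j \<le> coef w r j" if "j \<in> T" for r l j
  proof -
    have "coef w l j \<le> Max C" using fin that by (auto simp: C_def intro!: Max_ge)
    then have "kap * coef w l j \<le> kap * Max C" using mn mx by (intro mult_left_mono) (auto simp: kap_def)
    also have "\<dots> = Min C" using mx by (simp add: kap_def)
    also have "\<dots> \<le> coef w r j" using fin that by (auto simp: C_def intro!: Min_le)
    finally show ?thesis .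
  qed
  moreover have "0 < kap" using mn mx by (simp add: kap_def)
  ultimately show ?thesis using T supp by blast
qed

definition nz :: "real^'n \<Rightarrow> real^'n" where "nz x = (1 / norm x) *\<^sub>R x"

lemma nz_norm: "pos x \<Longrightarrow> norm (nz x) = 1"
  using pos_nonzero by (simp add: nz_def)

lemma nz_pos: "pos x \<Longrightarrow> pos (nz x)"
  using pos_nonzero by (simp add: nz_def pos_def)

lemma close_nz: "close d x y \<Longrightarrow> pos x \<Longrightarrow> pos y \<Longrightarrow> close d (nz x) (nz y)"
  unfolding nz_def by (rule close_scale) (auto dest: pos_nonzero)

end

locale gchain = chain +
  fixes w :: "'a list" and T :: "'a set" and kap :: real
  assumes T_ne: "T \<noteq> {}" and supp: "\<And>r j. coef w r j > 0 \<longleftrightarrow> j \<in> T"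
    and kap: "0 < kap" and cmp: "\<And>r l j. j \<in> T \<Longrightarrow> kap * coef w l j \<le> coef w r j"
begin

abbreviation "L \<equiv> length w"
definition "Dm = 1 / kap^2 - 1"
definition "q = 1 - kap^2"

lemma kap1: "kap \<le> 1"
proof -
  obtain j where "j \<in> T" using T_ne by blast
  then have "kap * coef w j j \<le> 1 * coef w j j" "0 < coef w j j" using cmp supp by auto
  then show ?thesis by simp
qed

lemma q_bounds: "0 \<le> q" "q \<le> 1" "q < 1"
  using kap kap1 by (auto simp: q_def power_le_one)

lemma Dm_nonneg: "0 \<le> Dm"
  using kap kap1 by (simp add: Dm_def field_simps power_le_one)

definition blk :: "nat \<Rightarrow> 'a stream \<Rightarrow> 'a list" where
  "blk j om = stake L (sdrop (j * L) om)"

fun cnt :: "'a stream \<Rightarrow> nat \<Rightarrow> nat" where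
  "cnt om 0 = 0"
| "cnt om (Suc j) = cnt om j + (if blk j om = w then 1 else 0)"

lemma stake_split: "m \<le> k \<Longrightarrow> stake k om = stake m om @ stake (k - m) (sdrop m om)"
  using stake_add[of m om "k - m"] by simp

lemma F_close:
  assumes "pos x" "pos y"
  shows "(close d x y \<longrightarrow> close (d * q ^ cnt om j) (applyw (stake (j * L) om) x) (applyw (stake (j * L) om) y))
     \<and> (1 \<le> cnt om j \<longrightarrow> close (Dm * q ^ (cnt om j - 1)) (applyw (stake (j * L) om) x) (applyw (stake (j * L) om) y))"
  using assms
proof (induction j arbitrary: x y d)
  case 0
  then show ?case by simp
next
  case (Suc j)
  define z where "z = applyw (blk j om) x"
  define z' where "z' = applyw (blk j om) y"
  have zp: "pos z" "pos z'" using Suc.prems by (auto simp: z_def z'_def applyw_pos)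
  have st: "stake (Suc j * L) om = stake (j * L) om @ blk j om"
    using stake_add[of "j * L" om L] by (simp add: blk_def add.commute)
  have ex: "applyw (stake (Suc j * L) om) x = applyw (stake (j * L) om) z"
           "applyw (stake (Suc j * L) om) y = applyw (stake (j * L) om) z'"
    by (simp_all only: st applyw_append z_def z'_def)
  show ?case
  proof (cases "blk j om = w")
    case True
    have c1: "close (d * q) z z'" if "close d x y"
      using contract(2)[OF T_ne supp kap cmp Suc.prems that] True
      by (simp add: z_def z'_def q_def mult.commute)
    have c2: "close Dm z z'"
      using contract(1)[OF T_ne supp kap cmp Suc.prems] True by (simp add: z_def z'_def Dm_def)
    have e1: "d * q * q ^ cnt om j = d * q ^ cnt om (Suc j)" using True by (simp add: mult.assoc)
    have e2: "Dm * q ^ cnt om j = Dm * q ^ (cnt om (Suc j) - 1)" using True by simp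
    show ?thesis unfolding ex
      using Suc.IH[OF zp, of "d * q"] Suc.IH[OF zp, of Dm] c1 c2 unfolding e1 e2 by blast
  next
    case False
    have c1: "close d z z'" if "close d x y" using close_applyw[OF that] by (simp add: z_def z'_def)
    have "cnt om (Suc j) = cnt om j" using False by simp
    then show ?thesis unfolding ex using Suc.IH[OF zp] c1 by simp
  qed
qed

end

context gchain
begin

definition V :: "real^'a \<Rightarrow> 'a stream \<Rightarrow> nat \<Rightarrow> real^'a" where
  "V y om k = nz (applyw (stake k om) y)"

lemma V_pos: "pos y \<Longrightarrow> pos (V y om k)"
  by (simp add: V_def nz_pos applyw_pos)

lemma V_norm: "pos y \<Longrightarrow> norm (V y om k) = 1"
  by (simp add: V_def nz_norm applyw_pos)

lemma tail_close:
  assumes "pos y" "pos y'" "1 \<le> cnt om j" "j * L \<le> k" "j * L \<le> k'"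
  shows "norm (V y om k - V y' om k') \<le> Dm * q ^ (cnt om j - 1)"
    "\<And>i. V y' om k' $ i \<le> (1 + Dm * q ^ (cnt om j - 1)) * V y om k $ i"
proof -
  define u where "u = applyw (stake (k - j * L) (sdrop (j * L) om)) y"
  define u' where "u' = applyw (stake (k' - j * L) (sdrop (j * L) om)) y'"
  have up: "pos u" "pos u'" using assms by (auto simp: u_def u'_def applyw_pos)
  have e: "applyw (stake k om) y = applyw (stake (j * L) om) u"
          "applyw (stake k' om) y' = applyw (stake (j * L) om) u'"
    unfolding u_def u'_def
    by (subst stake_split[OF assms(4), of om], simp only: applyw_append)
       (subst stake_split[OF assms(5), of om], simp only: applyw_append)
  have "close (Dm * q ^ (cnt om j - 1)) (applyw (stake (j * L) om) u) (applyw (stake (j * L) om) u')"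
    using F_close[OF up] assms(3) by blast
  then have c: "close (Dm * q ^ (cnt om j - 1)) (V y om k) (V y' om k')"
    unfolding V_def e by (rule close_nz) (use up applyw_pos in auto)
  show "norm (V y om k - V y' om k') \<le> Dm * q ^ (cnt om j - 1)"
    "\<And>i. V y' om k' $ i \<le> (1 + Dm * q ^ (cnt om j - 1)) * V y om k $ i"
    using close_unit[OF V_pos V_pos V_norm V_norm c] assms by auto
qed

definition "infhit om \<longleftrightarrow> (\<forall>n. \<exists>j\<ge>n. blk j om = w)"

lemma cnt_mono: "j \<le> j' \<Longrightarrow> cnt om j \<le> cnt om j'"
  by (induction j' rule: dec_induct) auto

lemma cnt_unbounded: "infhit om \<Longrightarrow> \<exists>j. c \<le> cnt om j"
proof (induction c)
  case 0
  then show ?case by simp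
next
  case (Suc c)
  then obtain j where j: "c \<le> cnt om j" by blast
  obtain j' where j': "j' \<ge> j" "blk j' om = w" using Suc.prems unfolding infhit_def by blast
  have "cnt om j \<le> cnt om j'" by (rule cnt_mono) fact
  then have "Suc c \<le> cnt om (Suc j')" using j j' by simp
  then show ?case by blast
qed

lemma unif:
  assumes "infhit om" "pos y" "pos y'" "eps > 0"
  shows "\<exists>M. \<forall>k\<ge>M. \<forall>k'\<ge>M. norm (V y om k - V y' om k') < eps"
proof -
  obtain n where n: "q ^ n < eps / (Dm + 1)"
    using real_arch_pow_inv[of "eps / (Dm + 1)" q] assms(4) Dm_nonneg q_bounds by auto
  obtain j where j: "Suc n \<le> cnt om j" using cnt_unbounded[OF assms(1)] by blast
  have "\<forall>k\<ge>j * L. \<forall>k'\<ge>j * L. norm (V y om k - V y' om k') < eps"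
  proof (intro allI impI)
    fix k k' assume kk: "j * L \<le> k" "j * L \<le> k'"
    have "norm (V y om k - V y' om k') \<le> Dm * q ^ (cnt om j - 1)"
      using tail_close(1)[OF assms(2,3) _ kk] j by simp
    also have "\<dots> \<le> Dm * q ^ n"
      using j q_bounds Dm_nonneg by (intro mult_left_mono power_decreasing) auto
    also have "\<dots> \<le> (Dm + 1) * q ^ n" using q_bounds by (intro mult_right_mono) auto
    also have "\<dots> < eps" using n Dm_nonneg by (simp add: pos_less_divide_eq mult.commute)
    finally show "norm (V y om k - V y' om k') < eps" .
  qed
  then show ?thesis by blast
qed

definition y1 :: "real^'a" where "y1 = (\<chi> i. 1)"

lemma y1_pos: "pos y1" by (simp add: y1_def pos_def)

definition Zlim :: "'a stream \<Rightarrow> real^'a" where "Zlim om = lim (V y1 om)"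

lemma V_lim:
  assumes "infhit om" "pos y"
  shows "V y om \<longlonglongrightarrow> Zlim om"
proof -
  have "Cauchy (V y1 om)"
    by (rule CauchyI) (use unif[OF assms(1) y1_pos y1_pos] in blast)
  then have c1: "V y1 om \<longlonglongrightarrow> Zlim om"
    unfolding Zlim_def by (simp add: Cauchy_convergent_iff convergent_LIMSEQ_iff)
  have "(\<lambda>k. V y om k - V y1 om k) \<longlonglongrightarrow> 0"
  proof (rule LIMSEQ_I)
    fix r :: real assume "0 < r"
    then obtain M where "\<forall>k\<ge>M. \<forall>k'\<ge>M. norm (V y om k - V y1 om k') < r"
      using unif[OF assms(1,2) y1_pos] by blast
    then show "\<exists>no. \<forall>n\<ge>no. norm (V y om n - V y1 om n - 0) < r" by auto
  qed
  from tendsto_add[OF this c1] show ?thesis by simp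
qed

lemma Zlim_Spos:
  assumes "infhit om"
  shows "Zlim om \<in> Spos"
proof -
  have lim: "V y1 om \<longlonglongrightarrow> Zlim om" by (rule V_lim[OF assms y1_pos])
  have "(\<lambda>k. norm (V y1 om k)) \<longlonglongrightarrow> norm (Zlim om)" by (intro tendsto_intros lim)
  moreover have "(\<lambda>k. norm (V y1 om k)) = (\<lambda>k. 1)" using V_norm[OF y1_pos] by auto
  ultimately have n1: "norm (Zlim om) = 1" using LIMSEQ_unique[OF tendsto_const] by metis
  obtain j where j: "1 \<le> cnt om j" using cnt_unbounded[OF assms] by blast
  have "0 < Zlim om $ i" for i
  proof -
    define c where "c = V y1 om (j * L) $ i / (1 + Dm)"
    have c0: "0 < c" using V_pos[OF y1_pos] Dm_nonneg by (simp add: c_def pos_def)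
    have "c \<le> V y1 om k $ i" if "k \<ge> j * L" for k
    proof -
      have "V y1 om (j * L) $ i \<le> (1 + Dm * q ^ (cnt om j - 1)) * V y1 om k $ i"
        using tail_close(2)[OF y1_pos y1_pos j that order.refl] .
      also have "\<dots> \<le> (1 + Dm) * V y1 om k $ i"
      proof -
        have "q ^ (cnt om j - 1) \<le> 1" using q_bounds by (simp add: power_le_one)
        then have "Dm * q ^ (cnt om j - 1) \<le> Dm" using Dm_nonneg by (simp add: mult_left_le)
        then show ?thesis using V_pos[OF y1_pos] by (intro mult_right_mono) (auto simp: pos_def less_imp_le)
      qed
      finally have "V y1 om (j * L) $ i \<le> (1 + Dm) * V y1 om k $ i" .
      moreover have "0 < 1 + Dm" using Dm_nonneg by simp
      ultimately show ?thesis unfolding c_def by (simp add: pos_divide_le_eq mult.commute)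
    qed
    moreover have "(\<lambda>k. V y1 om k $ i) \<longlonglongrightarrow> Zlim om $ i" by (intro tendsto_intros lim)
    ultimately have "c \<le> Zlim om $ i" by (intro LIMSEQ_le_const) auto
    then show ?thesis using c0 by simp
  qed
  then show ?thesis using n1 by (simp add: Spos_def)
qed

end

definition Unf :: "'a::finite pmf" where "Unf = pmf_of_set UNIV"

abbreviation Om :: "'a::finite stream measure" where "Om \<equiv> stream_space (measure_pmf Unf)"

lemma prob_Om: "prob_space (Om :: 'a::finite stream measure)"
  by (rule prob_space.prob_space_stream_space) (rule prob_space_measure_pmf)

lemma sets_Om: "sets (Om :: 'a::finite stream measure) = sets (stream_space (count_space UNIV))"
  by (rule sets_stream_space_cong) simp

lemma meas_stake[measurable]: "stake k \<in> measurable (Om :: 'a::finite stream measure) (count_space UNIV)"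
  using measurable_stake[of k] measurable_cong_sets[OF sets_Om refl] by blast

lemma meas_sdrop[measurable]: "sdrop k \<in> measurable (Om :: 'a::finite stream measure) Om"
  by (rule measurable_sdrop)

fun Lk :: "nat \<Rightarrow> 'a::finite list pmf" where
  "Lk 0 = return_pmf []"
| "Lk (Suc k) = bind_pmf Unf (\<lambda>x. map_pmf (\<lambda>ws. x # ws) (Lk k))"

lemma Lk_snoc: "(Lk (Suc k) :: 'a::finite list pmf) = bind_pmf (Lk k) (\<lambda>ws. map_pmf (\<lambda>i. ws @ [i]) Unf)"
proof (induction k)
  case 0
  then show ?case by (simp add: map_pmf_def bind_return_pmf bind_return_pmf')
next
  case (Suc k)
  have "(Lk (Suc (Suc k)) :: 'a list pmf) = bind_pmf Unf (\<lambda>x. map_pmf ((#) x) (bind_pmf (Lk k) (\<lambda>ws. map_pmf (\<lambda>i. ws @ [i]) Unf)))"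
    by (subst Lk.simps(2), subst Suc.IH, rule refl)
  also have "\<dots> = bind_pmf Unf (\<lambda>x. bind_pmf (Lk k) (\<lambda>ws. map_pmf (\<lambda>i. x # ws @ [i]) Unf))"
    by (simp add: map_bind_pmf map_pmf_comp o_def)
  also have "\<dots> = bind_pmf (Lk (Suc k)) (\<lambda>ws. map_pmf (\<lambda>i. ws @ [i]) Unf)"
    by (simp add: bind_assoc_pmf bind_map_pmf)
  finally show ?case .
qed

lemma Lk_rev: "map_pmf rev (Lk k) = (Lk k :: 'a::finite list pmf)"
proof (induction k)
  case 0
  then show ?case by simp
next
  case (Suc k)
  have "map_pmf rev (Lk (Suc k) :: 'a list pmf) = bind_pmf Unf (\<lambda>x. map_pmf (\<lambda>ws. rev ws @ [x]) (Lk k))"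
    by (simp add: map_bind_pmf map_pmf_comp o_def)
  also have "\<dots> = bind_pmf Unf (\<lambda>x. map_pmf (\<lambda>ws. ws @ [x]) (map_pmf rev (Lk k)))"
    by (simp add: map_pmf_comp o_def)
  also have "\<dots> = bind_pmf Unf (\<lambda>x. map_pmf (\<lambda>ws. ws @ [x]) (Lk k))"
    by (simp only: Suc.IH)
  also have "\<dots> = bind_pmf Unf (\<lambda>x. bind_pmf (Lk k) (\<lambda>ws. return_pmf (ws @ [x])))"
    by (simp add: map_pmf_def)
  also have "\<dots> = bind_pmf (Lk k) (\<lambda>ws. bind_pmf Unf (\<lambda>x. return_pmf (ws @ [x])))"
    by (rule bind_commute_pmf)
  also have "\<dots> = Lk (Suc k)"
    by (simp only: Lk_snoc map_pmf_def)
  finally show ?case .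
qed

lemma set_Lk: "set_pmf (Lk k :: 'a::finite list pmf) = {ws. length ws = k}"
proof (induction k)
  case 0
  then show ?case by simp
next
  case (Suc k)
  show ?case
  proof (intro set_eqI iffI)
    fix ws :: "'a list" assume "ws \<in> set_pmf (Lk (Suc k))"
    then show "ws \<in> {ws. length ws = Suc k}" by (auto simp: Suc.IH)
  next
    fix ws :: "'a list" assume "ws \<in> {ws. length ws = Suc k}"
    then obtain x ws' where "ws = x # ws'" "length ws' = k" by (cases ws) auto
    moreover have "x \<in> set_pmf Unf" by (simp add: Unf_def)
    ultimately show "ws \<in> set_pmf (Lk (Suc k))" by (auto simp: Suc.IH)
  qed
qed

lemma nn_split:
  fixes f :: "'a::finite list \<Rightarrow> ennreal" and g :: "'a stream \<Rightarrow> ennreal"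
  assumes g[measurable]: "g \<in> borel_measurable Om"
  shows "(\<integral>\<^sup>+om. f (stake k om) * g (sdrop k om) \<partial>Om) = (\<integral>\<^sup>+ws. f ws \<partial>Lk k) * (\<integral>\<^sup>+om. g om \<partial>Om)"
proof (induction k arbitrary: f)
  case 0
  then show ?case by (simp add: nn_integral_cmult)
next
  case (Suc k)
  have meas: "(\<lambda>om. f (stake (Suc k) om) * g (sdrop (Suc k) om)) \<in> borel_measurable Om"
  proof -
    have "(\<lambda>om. f (stake (Suc k) om)) \<in> borel_measurable Om"
      using measurable_compose[OF meas_stake borel_measurable_count_space] by blast
    moreover have "(\<lambda>om. g (sdrop (Suc k) om)) \<in> borel_measurable Om"
      using measurable_compose[OF meas_sdrop g] by blast
    ultimately show ?thesis by measurable
  qed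
  have "(\<integral>\<^sup>+om. f (stake (Suc k) om) * g (sdrop (Suc k) om) \<partial>Om)
      = (\<integral>\<^sup>+x. \<integral>\<^sup>+om. f (x # stake k om) * g (sdrop k om) \<partial>Om \<partial>measure_pmf Unf)"
    by (subst prob_space.nn_integral_stream_space[OF prob_space_measure_pmf meas]) simp
  also have "\<dots> = (\<integral>\<^sup>+x. (\<integral>\<^sup>+ws. f (x # ws) \<partial>(Lk k :: 'a list pmf)) * (\<integral>\<^sup>+om. g om \<partial>Om) \<partial>measure_pmf Unf)"
  proof -
    have ih: "(\<integral>\<^sup>+om. f (x # stake k om) * g (sdrop k om) \<partial>Om) = (\<integral>\<^sup>+ws. f (x # ws) \<partial>(Lk k :: 'a list pmf)) * (\<integral>\<^sup>+om. g om \<partial>Om)" for x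
      using Suc.IH[of "\<lambda>ws. f (x # ws)"] by simp
    show ?thesis by (simp add: ih)
  qed
  also have "\<dots> = (\<integral>\<^sup>+x. (\<integral>\<^sup>+ws. f (x # ws) \<partial>(Lk k :: 'a list pmf)) \<partial>measure_pmf Unf) * (\<integral>\<^sup>+om. g om \<partial>Om)"
    by (rule nn_integral_multc) simp
  also have "\<dots> = (\<integral>\<^sup>+ws. f ws \<partial>Lk (Suc k)) * (\<integral>\<^sup>+om. g om \<partial>Om)"
    by simp
  finally show ?case .
qed

lemma distr_stake: "distr (Om :: 'a::finite stream measure) (count_space UNIV) (stake k) = measure_pmf (Lk k)"
proof (rule measure_eqI)
  show "sets (distr Om (count_space UNIV) (stake k)) = sets (measure_pmf (Lk k))" by simp
next
  fix A assume "A \<in> sets (distr (Om :: 'a stream measure) (count_space UNIV) (stake k))"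
  have "emeasure (distr Om (count_space UNIV) (stake k)) A
      = (\<integral>\<^sup>+x. indicator A x \<partial>distr (Om :: 'a stream measure) (count_space UNIV) (stake k))"
    by (rule nn_integral_indicator[symmetric]) simp
  also have "\<dots> = (\<integral>\<^sup>+om. indicator A (stake k om) \<partial>(Om :: 'a stream measure))"
    by (rule nn_integral_distr[OF meas_stake]) simp
  also have "\<dots> = (\<integral>\<^sup>+om. indicator A (stake k om) * 1 \<partial>(Om :: 'a stream measure))"
    by simp
  also have "\<dots> = (\<integral>\<^sup>+ws. indicator A ws \<partial>Lk k) * (\<integral>\<^sup>+om. 1 \<partial>(Om :: 'a stream measure))"
    using nn_split[where f="indicator A" and g="\<lambda>_. 1" and k=k] by simp
  also have "\<dots> = emeasure (measure_pmf (Lk k)) A"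
    using prob_space.emeasure_space_1[OF prob_Om[where 'a='a]] by (simp add: nn_integral_indicator)
  finally show "emeasure (distr Om (count_space UNIV) (stake k)) A = emeasure (measure_pmf (Lk k)) A" .
qed

lemma integral_stake:
  fixes G :: "'a::finite list \<Rightarrow> real"
  shows "(\<integral>ws. G ws \<partial>measure_pmf (Lk k)) = (\<integral>om. G (stake k om) \<partial>(Om :: 'a stream measure))"
proof -
  have "(\<integral>ws. G ws \<partial>measure_pmf (Lk k)) = (\<integral>ws. G ws \<partial>distr (Om :: 'a stream measure) (count_space UNIV) (stake k))"
    by (simp add: distr_stake)
  also have "\<dots> = (\<integral>om. G (stake k om) \<partial>(Om :: 'a stream measure))"
    by (rule integral_distr) auto
  finally show ?thesis .
qed

context gchain
begin

lemma nz_scale: "c > 0 \<Longrightarrow> nz (c *\<^sub>R x) = nz x"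
  by (cases "x = 0") (simp_all add: nz_def)

lemma Amap_scale: "Amap P e i (c *\<^sub>R x) = c *\<^sub>R Amap P e i x"
  using applyw_scale[of "[i]" c x] by simp

lemma stepY_nz: "stepY P e i (nz x) = nz (Amap P e i x)" if "x \<noteq> 0"
proof -
  have "stepY P e i (nz x) = nz (Amap P e i (nz x))" by (simp add: stepY_def nz_def)
  also have "\<dots> = nz ((1 / norm x) *\<^sub>R Amap P e i x)" by (simp add: nz_def Amap_scale)
  also have "\<dots> = nz (Amap P e i x)" using that by (intro nz_scale) simp
  finally show ?thesis .
qed

lemma Spos_pos: "y \<in> Spos \<Longrightarrow> pos y" by (simp add: Spos_def pos_def)

lemma nz_unit: "norm y = 1 \<Longrightarrow> nz y = y" by (simp add: nz_def)

lemma lawY_rev: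
  assumes "y0 \<in> Spos"
  shows "lawY P e k y0 = map_pmf (\<lambda>ws. nz (applyw (rev ws) y0)) (Lk k)"
proof (induction k)
  case 0
  then show ?case using assms by (simp add: nz_unit Spos_def)
next
  case (Suc k)
  define Zr where "Zr = (\<lambda>ws. nz (applyw (rev ws) y0))"
  have st: "stepY P e i (Zr ws) = Zr (ws @ [i])" for ws i
    unfolding Zr_def using applyw_pos[OF Spos_pos[OF assms]]
    by (simp add: stepY_nz pos_nonzero)
  have "lawY P e (Suc k) y0 = bind_pmf (map_pmf Zr (Lk k)) (\<lambda>x. map_pmf (\<lambda>i. stepY P e i x) Unf)"
    using Suc.IH by (simp add: Zr_def Unf_def)
  also have "\<dots> = bind_pmf (Lk k) (\<lambda>ws. map_pmf (\<lambda>i. Zr (ws @ [i])) Unf)"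
    by (simp add: bind_map_pmf st)
  also have "\<dots> = map_pmf Zr (Lk (Suc k))"
    by (simp only: Lk_snoc map_bind_pmf map_pmf_comp o_def)
  finally show ?case by (simp add: Zr_def)
qed

lemma lawY_eq:
  assumes "y0 \<in> Spos"
  shows "lawY P e k y0 = map_pmf (\<lambda>ws. nz (applyw ws y0)) (Lk k)"
proof -
  have "lawY P e k y0 = map_pmf (\<lambda>ws. nz (applyw ws y0)) (map_pmf rev (Lk k))"
    by (simp add: lawY_rev[OF assms] map_pmf_comp o_def)
  then show ?thesis by (simp add: Lk_rev)
qed

lemma integral_lawY:
  fixes G :: "real^'a \<Rightarrow> real"
  assumes "y0 \<in> Spos"
  shows "(\<integral>x. G x \<partial>measure_pmf (lawY P e k y0)) = (\<integral>om. G (V y0 om k) \<partial>Om)"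
  using integral_stake[where G="\<lambda>ws. G (nz (applyw ws y0))" and k=k]
  by (simp add: lawY_eq[OF assms] V_def)

lemma meas_blk[measurable]: "blk j \<in> measurable Om (count_space UNIV)"
  unfolding blk_def by (rule measurable_compose[OF meas_sdrop meas_stake])

lemma meas_V[measurable]: "(\<lambda>om. V y om k) \<in> borel_measurable Om"
  unfolding V_def
  by (rule measurable_compose[OF meas_stake, where g = "\<lambda>ws. nz (applyw ws y)"]) simp

lemma meas_Zlim[measurable]: "Zlim \<in> borel_measurable Om"
  unfolding Zlim_def by measurable

definition "NoHit m om \<longleftrightarrow> (\<forall>j<m. blk j om \<noteq> w)"

lemma pred_NoHit[measurable]: "Measurable.pred Om (NoHit m)"
  unfolding NoHit_def by measurable

lemma blk_shift: "blk (n + j) om = blk j (sdrop (n * L) om)"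
  by (simp add: blk_def add_mult_distrib)

lemma NoHit_Suc: "NoHit (Suc m) om \<longleftrightarrow> stake L om \<noteq> w \<and> NoHit m (sdrop L om)"
proof -
  have "blk 0 om = stake L om" by (simp add: blk_def)
  moreover have "blk (Suc j) om = blk j (sdrop L om)" for j
    using blk_shift[of 1 j om] by simp
  ultimately show ?thesis unfolding NoHit_def
    by (auto simp: less_Suc_eq_0_disj)
qed

definition "pw = pmf (Lk L) w"

lemma pw_pos: "0 < pw"
  unfolding pw_def by (simp add: pmf_positive_iff set_Lk)

lemma pw_le1: "pw \<le> 1"
  unfolding pw_def by (rule pmf_le_1)

lemma em_neq: "emeasure (measure_pmf (Lk L)) {ws. ws \<noteq> w} = ennreal (1 - pw)"
proof -
  have "measure (measure_pmf (Lk L)) (UNIV - {w}) = 1 - measure (measure_pmf (Lk L)) {w}"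
    using measure_pmf.prob_compl[of "{w}" "Lk L"] by simp
  moreover have "{ws. ws \<noteq> w} = UNIV - {w}" by auto
  ultimately show ?thesis
    by (simp add: measure_pmf.emeasure_eq_measure measure_pmf_single pw_def)
qed

lemma em_NoHit: "emeasure Om {om \<in> space Om. NoHit m om} = ennreal ((1 - pw) ^ m)"
proof (induction m)
  case 0
  then show ?case using prob_space.emeasure_space_1[OF prob_Om[where 'a='a]]
    by (simp add: NoHit_def)
next
  case (Suc m)
  have "emeasure Om {om \<in> space Om. NoHit (Suc m) om}
      = (\<integral>\<^sup>+om. indicator {om \<in> space Om. NoHit (Suc m) om} om \<partial>Om)"
    by (rule nn_integral_indicator[symmetric]) measurable
  also have "\<dots> = (\<integral>\<^sup>+om. indicator {ws. ws \<noteq> w} (stake L om) * indicator {om \<in> space Om. NoHit m om} (sdrop L om) \<partial>Om)"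
    by (intro nn_integral_cong) (auto simp: NoHit_Suc space_stream_space split: split_indicator)
  also have "\<dots> = emeasure (measure_pmf (Lk L)) {ws. ws \<noteq> w} * emeasure Om {om \<in> space Om. NoHit m om}"
    by (subst nn_split) (auto simp: nn_integral_indicator)
  also have "\<dots> = ennreal ((1 - pw) ^ Suc m)"
    using Suc.IH pw_le1 by (simp add: em_neq ennreal_mult[symmetric])
  finally show ?case .
qed

lemma AE_infhit: "AE om in Om. infhit om"
proof -
  interpret Omp: prob_space "Om :: 'a stream measure" by (rule prob_Om)
  have "AE om in Om. \<exists>j\<ge>n. blk j om = w" for n
  proof -
    define N where "N = {om \<in> space Om. \<not> (\<exists>j\<ge>n. blk j om = w)}"
    have Nm: "N \<in> sets Om" unfolding N_def by measurable
    have le: "measure Om N \<le> (1 - pw) ^ m" for m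
    proof -
      have sp: "space Om = UNIV" by (simp add: space_stream_space)
      have "N \<subseteq> {om \<in> space Om. NoHit m (sdrop (n * L) om)}"
      proof
        fix om assume "om \<in> N"
        then have h: "\<And>j. j \<ge> n \<Longrightarrow> blk j om \<noteq> w" by (auto simp: N_def)
        have "blk j (sdrop (n * L) om) \<noteq> w" for j
          using h[of "n + j"] blk_shift[of n j om] by simp
        then show "om \<in> {om \<in> space Om. NoHit m (sdrop (n * L) om)}"
          by (simp add: NoHit_def sp)
      qed
      moreover have S'm: "{om \<in> space Om. NoHit m (sdrop (n * L) om)} \<in> sets Om" by measurable
      ultimately have "emeasure Om N \<le> emeasure Om {om \<in> space Om. NoHit m (sdrop (n * L) om)}"
        by (rule emeasure_mono)
      also have "\<dots> = (\<integral>\<^sup>+om. indicator {om \<in> space Om. NoHit m (sdrop (n * L) om)} om \<partial>Om)"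
        by (rule nn_integral_indicator[symmetric, OF S'm])
      also have "\<dots> = (\<integral>\<^sup>+om. indicator UNIV (stake (n * L) om) * indicator {om \<in> space Om. NoHit m om} (sdrop (n * L) om) \<partial>Om)"
        by (rule nn_integral_cong) (simp add: sp split: split_indicator)
      also have "\<dots> = ennreal ((1 - pw) ^ m)"
        by (subst nn_split) (simp_all add: nn_integral_indicator em_NoHit)
      finally show ?thesis
        using Omp.emeasure_eq_measure pw_le1 by simp
    qed
    have "(\<lambda>m. (1 - pw) ^ m) \<longlonglongrightarrow> 0"
      by (rule LIMSEQ_realpow_zero) (use pw_pos pw_le1 in auto)
    then have "measure Om N \<le> 0"
      by (rule LIMSEQ_le_const) (intro exI[of _ 0] allI impI le)
    then have "emeasure Om N = 0"
      using Omp.emeasure_eq_measure measure_nonneg[of Om N] by simp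
    then show ?thesis by (subst AE_iff_measurable[OF Nm]) (auto simp: N_def)
  qed
  then have "AE om in Om. \<forall>n. \<exists>j\<ge>n. blk j om = w" by (simp add: AE_all_countable)
  then show ?thesis by (simp add: infhit_def)
qed

end

lemma lim_closed:
  fixes nu :: "(real^'n) measure"
  assumes sets: "sets nu = sets borel" and P: "prob_space nu" and S: "S \<in> sets borel"
    and C: "closed C" "C \<noteq> {}"
  shows "(\<lambda>m. \<integral>x. indicator S x * max 0 (1 - real m * infdist x C) \<partial>nu) \<longlonglongrightarrow> measure nu (S \<inter> C)"
proof -
  interpret prob_space nu by (rule P)
  have mc[measurable]: "S \<inter> C \<in> sets nu" using S C by (simp add: sets)
  have mS[measurable]: "S \<in> sets nu" using S by (simp add: sets)
  have gm: "(\<lambda>x. max 0 (1 - real m * infdist x C)) \<in> borel_measurable nu" for m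
    unfolding measurable_cong_sets[OF sets refl]
    by (intro borel_measurable_continuous_onI continuous_intros)
  have "(\<lambda>m. \<integral>x. indicator S x * max 0 (1 - real m * infdist x C) \<partial>nu) \<longlonglongrightarrow> (\<integral>x. indicator (S \<inter> C) x \<partial>nu)"
  proof (rule integral_dominated_convergence[where w = "\<lambda>_. 1"])
    show "indicator (S \<inter> C) \<in> borel_measurable nu" by measurable
    show "(\<lambda>x. indicator S x * max 0 (1 - real m * infdist x C)) \<in> borel_measurable nu" for m
      using gm by measurable
    show "integrable nu (\<lambda>_. 1::real)" by simp
    show "AE x in nu. norm (indicator S x * max 0 (1 - real m * infdist x C)) \<le> (1::real)" for m
    proof (rule AE_I2)
      fix x
      have "0 \<le> real m * infdist x C" by (simp add: infdist_nonneg)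
      then show "norm (indicator S x * max 0 (1 - real m * infdist x C)) \<le> (1::real)"
        by (auto simp: indicator_def)
    qed
    show "AE x in nu. (\<lambda>m. indicator S x * max 0 (1 - real m * infdist x C)) \<longlonglongrightarrow> indicator (S \<inter> C) x"
    proof (rule AE_I2)
      fix x
      show "(\<lambda>m. indicator S x * max 0 (1 - real m * infdist x C)) \<longlonglongrightarrow> indicator (S \<inter> C) x"
      proof (cases "x \<in> C")
        case True
        then show ?thesis by (simp add: indicator_def)
      next
        case False
        then have d: "0 < infdist x C"
          using C in_closed_iff_infdist_zero[of C x] infdist_nonneg[of x C] by linarith
        obtain m0 :: nat where m0: "1 / infdist x C < real m0" using reals_Archimedean2 by blast
        have "eventually (\<lambda>m. indicator S x * max 0 (1 - real m * infdist x C) = 0) sequentially"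
          unfolding eventually_sequentially
        proof (intro exI[of _ m0] allI impI)
          fix m assume "m0 \<le> m"
          then have "1 / infdist x C < real m" using m0 by linarith
          then have "1 \<le> real m * infdist x C" using d by (simp add: field_simps)
          then show "indicator S x * max 0 (1 - real m * infdist x C) = 0" by simp
        qed
        then have "(\<lambda>m. indicator S x * max 0 (1 - real m * infdist x C)) \<longlonglongrightarrow> 0"
          by (rule tendsto_eventually)
        then show ?thesis using False by (simp add: indicator_def)
      qed
    qed
  qed
  then show ?thesis using mc by simp
qed

lemma meas_uniq:
  fixes nu1 nu2 :: "(real^'n) measure"
  assumes s1: "sets nu1 = sets borel" and s2: "sets nu2 = sets borel"
    and p1: "prob_space nu1" and p2: "prob_space nu2"
    and S: "S \<in> sets borel" and e1: "emeasure nu1 S = 1" and e2: "emeasure nu2 S = 1"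
    and I: "\<And>f :: real^'n \<Rightarrow> real. continuous_on UNIV f \<Longrightarrow> bounded (range f) \<Longrightarrow>
             (\<integral>x. indicator S x * f x \<partial>nu1) = (\<integral>x. indicator S x * f x \<partial>nu2)"
  shows "nu1 = nu2"
proof -
  have cl: "emeasure nu1 C = emeasure nu2 C" if "closed C" for C
  proof (cases "C = {}")
    case True
    then show ?thesis by simp
  next
    case False
    have "measure nu1 (S \<inter> C) = measure nu2 (S \<inter> C)"
    proof (rule LIMSEQ_unique[OF lim_closed[OF s1 p1 S that False]])
      have "(\<integral>x. indicator S x * max 0 (1 - real m * infdist x C) \<partial>nu1)
          = (\<integral>x. indicator S x * max 0 (1 - real m * infdist x C) \<partial>nu2)" for m
      proof -
        have "continuous_on UNIV (\<lambda>x. max 0 (1 - real m * infdist x C))"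
          by (intro continuous_intros)
        moreover have "\<forall>x. norm (max 0 (1 - real m * infdist x C)) \<le> 1"
          by (auto simp: abs_if infdist_nonneg intro!: mult_nonneg_nonneg)
        then have "bounded (range (\<lambda>x. max 0 (1 - real m * infdist x C)))"
          unfolding bounded_iff by blast
        ultimately show ?thesis using I[of "\<lambda>x. max 0 (1 - real m * infdist x C)"] by simp
      qed
      then show "(\<lambda>m. \<integral>x. indicator S x * max 0 (1 - real m * infdist x C) \<partial>nu1) \<longlonglongrightarrow> measure nu2 (S \<inter> C)"
        using lim_closed[OF s2 p2 S that False] by simp
    qed
    moreover have "emeasure nu C = ennreal (measure nu (S \<inter> C))"
      if s: "sets nu = sets borel" and p: "prob_space nu" and e: "emeasure nu S = 1" for nu :: "(real^'n) measure"
    proof -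
      interpret prob_space nu by (rule p)
      have Sm: "S \<in> sets nu" using S s by simp
      have Cm: "C \<in> sets nu" using \<open>closed C\<close> s by simp
      have "emeasure nu (space nu - S) = 0" using emeasure_compl[OF Sm] e emeasure_space_1 by simp
      then have nul: "space nu - S \<in> null_sets nu" using Sm by auto
      have "emeasure nu C = emeasure nu (C - (space nu - S))"
        by (rule emeasure_Diff_null_set[OF nul Cm, symmetric])
      also have "C - (space nu - S) = S \<inter> C" using sets.sets_into_space[OF Cm] by auto
      finally show ?thesis by (simp add: emeasure_eq_measure)
    qed
    ultimately show ?thesis using s1 s2 p1 p2 e1 e2 by metis
  qed
  show ?thesis
  proof (rule measure_eqI_generator_eq[where E = "Collect closed" and \<Omega> = UNIV and A = "\<lambda>_. UNIV"])
    show "Int_stable (Collect closed)" by (auto simp: Int_stable_def)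
    show "Collect closed \<subseteq> Pow UNIV" by simp
    show "\<And>X. X \<in> Collect closed \<Longrightarrow> emeasure nu1 X = emeasure nu2 X" using cl by simp
    have "sets (borel :: (real^'n) measure) = sigma_sets UNIV (Collect closed)"
      by (subst borel_eq_closed) (simp add: sets_measure_of)
    then show "sets nu1 = sigma_sets UNIV (Collect closed)" "sets nu2 = sigma_sets UNIV (Collect closed)"
      using s1 s2 by simp_all
    show "range (\<lambda>_. UNIV) \<subseteq> Collect closed" by simp
    show "(\<Union>i::nat. UNIV) = (UNIV :: (real^'n) set)" by simp
    show "emeasure nu1 UNIV \<noteq> \<infinity>" for i :: nat
      using prob_space.emeasure_le_1[OF p1, of UNIV] by (auto simp: top_unique)
  qed
qed

lemma Spos_borel: "(Spos :: (real^'n::finite) set) \<in> sets borel"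
  unfolding Spos_def by measurable

context gchain
begin

lemma V_Spos: "pos y \<Longrightarrow> V y om k \<in> Spos"
  using V_pos[of y om k] V_norm[of y om k] by (simp add: Spos_def pos_def)

definition nu0 :: "(real^'a) measure" where "nu0 = distr Om borel Zlim"

lemma nu0_sets: "sets nu0 = sets borel" by (simp add: nu0_def)

lemma nu0_prob: "prob_space nu0"
  unfolding nu0_def by (rule prob_space.prob_space_distr[OF prob_Om meas_Zlim])

lemma nu0_Spos: "emeasure nu0 Spos = 1"
proof -
  interpret Omp: prob_space "Om :: 'a stream measure" by (rule prob_Om)
  have "emeasure nu0 Spos = emeasure Om (Zlim -` Spos \<inter> space Om)"
    unfolding nu0_def by (rule emeasure_distr[OF meas_Zlim Spos_borel])
  also have "\<dots> = 1"
  proof (rule Omp.emeasure_eq_1_AE)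
    show "Zlim -` Spos \<inter> space Om \<in> sets Om"
      by (rule measurable_sets[OF meas_Zlim Spos_borel])
    show "AE x in Om. x \<in> Zlim -` Spos \<inter> space Om"
      using AE_infhit by eventually_elim (auto simp: Zlim_Spos space_stream_space)
  qed
  finally show ?thesis .
qed

lemma nu0_weak:
  assumes y0: "y0 \<in> Spos"
  shows "weak_conv_on Spos (\<lambda>k. measure_pmf (lawY P e k y0)) nu0"
  unfolding weak_conv_on_def
proof (intro allI impI, elim conjE)
  fix f :: "real^'a \<Rightarrow> real"
  assume cont: "continuous_on Spos f" and bnd: "bounded (f ` Spos)"
  interpret Omp: prob_space "Om :: 'a stream measure" by (rule prob_Om)
  have py: "pos y0" using y0 by (rule Spos_pos)
  define G where "G x = indicator Spos x * f x" for x
  have Gm[measurable]: "G \<in> borel_measurable borel"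
    using borel_measurable_continuous_on_indicator[OF Spos_borel cont] by (simp add: G_def[abs_def])
  obtain B where B: "\<And>x. x \<in> Spos \<Longrightarrow> norm (f x) \<le> B" using bnd unfolding bounded_iff by blast
  have GB: "norm (G x) \<le> max B 0" for x
    using B[of x] by (auto simp: G_def indicator_def)
  have int1: "(\<integral>x. G x \<partial>measure_pmf (lawY P e k y0)) = (\<integral>om. G (V y0 om k) \<partial>Om)" for k
    by (rule integral_lawY[OF y0])
  have int2: "(\<integral>x. G x \<partial>nu0) = (\<integral>om. G (Zlim om) \<partial>Om)"
    unfolding nu0_def by (rule integral_distr[OF meas_Zlim Gm])
  have "(\<lambda>k. \<integral>om. G (V y0 om k) \<partial>Om) \<longlonglongrightarrow> (\<integral>om. G (Zlim om) \<partial>Om)"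
  proof (rule integral_dominated_convergence[where w = "\<lambda>_. max B 0"])
    show "(\<lambda>om. G (Zlim om)) \<in> borel_measurable Om" by measurable
    show "(\<lambda>om. G (V y0 om k)) \<in> borel_measurable Om" for k by measurable
    show "integrable (Om :: 'a stream measure) (\<lambda>_. max B 0)" by (rule Omp.integrable_const)
    show "AE x in Om. norm (G (V y0 x k)) \<le> max B 0" for k using GB by simp
    show "AE x in Om. (\<lambda>k. G (V y0 x k)) \<longlonglongrightarrow> G (Zlim x)"
      using AE_infhit
    proof eventually_elim
      case (elim om)
      have "(\<lambda>k. f (V y0 om k)) \<longlonglongrightarrow> f (Zlim om)"
        by (rule continuous_on_tendsto_compose[OF cont V_lim[OF elim py] Zlim_Spos[OF elim]])
           (simp add: V_Spos[OF py])
      then show ?case using V_Spos[OF py] Zlim_Spos[OF elim] by (simp add: G_def)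
    qed
  qed
  then show "(\<lambda>k. \<integral>x. indicator Spos x * f x \<partial>measure_pmf (lawY P e k y0)) \<longlonglongrightarrow> (\<integral>x. indicator Spos x * f x \<partial>nu0)"
    using int1 int2 by (simp add: G_def)
qed

theorem main:
  "\<exists>!\<nu>. sets \<nu> = sets (borel :: (real^'a) measure) \<and> prob_space \<nu> \<and> emeasure \<nu> Spos = 1 \<and>
      (\<forall>y0\<in>Spos. weak_conv_on Spos (\<lambda>k. measure_pmf (lawY P e k y0)) \<nu>)"
proof (rule ex1I[where a = nu0])
  show "sets nu0 = sets borel \<and> prob_space nu0 \<and> emeasure nu0 Spos = 1 \<and>
      (\<forall>y0\<in>Spos. weak_conv_on Spos (\<lambda>k. measure_pmf (lawY P e k y0)) nu0)"
    using nu0_sets nu0_prob nu0_Spos nu0_weak by blast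
next
  fix nu :: "(real^'a) measure"
  assume h: "sets nu = sets borel \<and> prob_space nu \<and> emeasure nu Spos = 1 \<and>
      (\<forall>y0\<in>Spos. weak_conv_on Spos (\<lambda>k. measure_pmf (lawY P e k y0)) nu)"
  define ys where "ys = nz y1"
  have ys: "ys \<in> Spos" using nz_pos[OF y1_pos] nz_norm[OF y1_pos]
    by (simp add: ys_def Spos_def pos_def)
  show "nu = nu0"
  proof (rule meas_uniq[OF _ nu0_sets _ nu0_prob Spos_borel _ nu0_Spos])
    show "sets nu = sets borel" "prob_space nu" "emeasure nu Spos = 1" using h by auto
    fix f :: "real^'a \<Rightarrow> real"
    assume "continuous_on UNIV f" "bounded (range f)"
    then have c: "continuous_on Spos f \<and> bounded (f ` Spos)"
      by (auto intro: continuous_on_subset bounded_subset)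
    show "(\<integral>x. indicator Spos x * f x \<partial>nu) = (\<integral>x. indicator Spos x * f x \<partial>nu0)"
    proof (rule LIMSEQ_unique)
      show "(\<lambda>k. \<integral>x. indicator Spos x * f x \<partial>measure_pmf (lawY P e k ys)) \<longlonglongrightarrow> (\<integral>x. indicator Spos x * f x \<partial>nu)"
        using h ys c unfolding weak_conv_on_def by blast
      show "(\<lambda>k. \<integral>x. indicator Spos x * f x \<partial>measure_pmf (lawY P e k ys)) \<longlonglongrightarrow> (\<integral>x. indicator Spos x * f x \<partial>nu0)"
        using nu0_weak[OF ys] c unfolding weak_conv_on_def by blast
    qed
  qed
qed

end

theorem lemma3p2:
  fixes P :: "'n::finite \<Rightarrow> 'n \<Rightarrow> real" and e :: "'n \<Rightarrow> real"
  assumes "CARD('n) \<ge> 2"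
    and "\<And>i j. P i j \<ge> 0"
    and "\<And>i. (\<Sum>j\<in>UNIV. P i j) = 1"
    and "\<And>i. P i i = 0"
    and "\<And>i j. (i, j) \<in> {(a, b). P a b > 0}\<^sup>+"
    and "\<And>i. 0 < e i \<and> e i < 1"
  shows "\<exists>!\<nu>. sets \<nu> = sets (borel :: (real^'n) measure) \<and> prob_space \<nu> \<and> emeasure \<nu> Spos = 1 \<and>
           (\<forall>y0\<in>Spos. weak_conv_on Spos (\<lambda>k. measure_pmf (lawY P e k y0)) \<nu>)"
proof -
  interpret chain P e
    using assms by unfold_locales auto
  obtain w T kap where g: "T \<noteq> {}" "\<forall>r j. coef w r j > 0 \<longleftrightarrow> j \<in> T" "0 < kap"
    "\<forall>r l j. j \<in> T \<longrightarrow> kap * coef w l j \<le> coef w r j"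
    using good_word by blast
  interpret gchain P e w T kap
    using g by unfold_locales auto
  show ?thesis by (rule main)
qed

end
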